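(* The Jouanolou foliation $\mathcal{J}_2$ satisfies property $\mathcal{P}_S$: the vector field $J_2$ does not vanish on $\mathbf{C}^3\setminus\{0\}$, every singular point of $\mathcal{J}_2$ is hyperbolic, and every singular point of $\mathcal{J}_2$ is a source of the real field $W$.
   Context: $\mathcal{J}_2$ is the foliation of $\mathbf{P}^2_{\mathbf{C}}$ induced by the divergence-free homogeneous vector field $J_2=y^2\partial_x+z^2\partial_y+x^2\partial_z$ on $\mathbf{C}^3$. With $\Pi:\mathbf{C}^3\setminus\{0\}\to\mathbf{P}^2_{\mathbf{C}}$ and $p\cdot p'=x\bar x'+y\bar y'+z\bar z'$, the real field $W$ is the projection to $\mathbf{P}^2_{\mathbf{C}}$ of the real vector field $\mathrm{Re}(\tilde\rho J_2)$, $\tilde\rho(p)=-2(p\cdot J_2(p))/\|p\|^{4}$. A singular point is hyperbolic if the two eigenvalues of a local holomorphic vector field defining the foliation there are not $\mathbf{R}$-collinear; it is a source of $W$ if all eigenvalues of the linearization of $W$ there have positive real part. *)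

theory Defs
  imports "HOL-Analysis.Analysis" "Jordan_Normal_Form.Char_Poly"
begin

type_synonym c3 = "complex \<times> complex \<times> complex"

fun J2 :: "c3 \<Rightarrow> c3" where
  "J2 (x, y, z) = (y^2, z^2, x^2)"

fun herm :: "c3 \<Rightarrow> c3 \<Rightarrow> complex" where
  "herm (x, y, z) (x', y', z') = x * cnj x' + y * cnj y' + z * cnj z'"

fun sqnorm3 :: "c3 \<Rightarrow> real" where
  "sqnorm3 (x, y, z) = (cmod x)^2 + (cmod y)^2 + (cmod z)^2"

definition rho :: "c3 \<Rightarrow> complex" where
  "rho p = -2 * herm p (J2 p) / complex_of_real ((sqnorm3 p)^2)"

fun cscale :: "complex \<Rightarrow> c3 \<Rightarrow> c3" where
  "cscale c (x, y, z) = (c * x, c * y, c * z)"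

text \<open>The field rho~ J2 on C^3 minus 0 (its real part Re(rho~ J2) is the real field whose flow is
  p' = rho~(p) J2(p) with real time).\<close>
definition rhoJ2 :: "c3 \<Rightarrow> c3" where
  "rhoJ2 p = cscale (rho p) (J2 p)"

fun coord :: "nat \<Rightarrow> c3 \<Rightarrow> complex" where
  "coord k (x, y, z) = (if k = 0 then x else if k = 1 then y else z)"

fun others :: "nat \<Rightarrow> c3 \<Rightarrow> complex \<times> complex" where
  "others k (x, y, z) = (if k = 0 then (y, z) else if k = 1 then (x, z) else (x, y))"

text \<open>Standard affine charts of P^2: U_k = {p_k \<noteq> 0}; emb k is the inverse of the chart.\<close>
fun emb :: "nat \<Rightarrow> complex \<times> complex \<Rightarrow> c3" where
  "emb k (u, v) = (if k = 0 then (1, u, v) else if k = 1 then (u, 1, v) else (u, v, 1))"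

definition aff :: "nat \<Rightarrow> c3 \<Rightarrow> complex \<times> complex" where
  "aff k p = (fst (others k p) / coord k p, snd (others k p) / coord k p)"

text \<open>Expression in the affine chart k of (the projection to P^2 of) a vector field V on C^3:
  the derivative of the chart map p \<mapsto> others k p / p_k along V, at the point p = emb k q.\<close>
definition chart_field :: "nat \<Rightarrow> (c3 \<Rightarrow> c3) \<Rightarrow> complex \<times> complex \<Rightarrow> complex \<times> complex" where
  "chart_field k V q =
     (let p = emb k q; w = V p
      in (fst (others k w) - fst q * coord k w, snd (others k w) - snd q * coord k w))"

text \<open>Singular points of the foliation J_2 of P^2 (given by representatives p in C^3 minus 0):
  J2(p) is parallel to p.\<close>
definition sing_J2 :: "c3 \<Rightarrow> bool" where
  "sing_J2 p \<longleftrightarrow> p \<noteq> 0 \<and> (\<exists>c. J2 p = cscale c p)"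

definition cjac :: "(complex \<times> complex \<Rightarrow> complex \<times> complex) \<Rightarrow> complex \<times> complex \<Rightarrow> complex mat" where
  "cjac X q = mat 2 2 (\<lambda>(i, j).
     let comp = (if i = 0 then fst else snd);
         arg = (if j = 0 then (\<lambda>s. (s, snd q)) else (\<lambda>s. (fst q, s)));
         pt = (if j = 0 then fst q else snd q)
     in deriv (\<lambda>s. comp (X (arg s))) pt)"

definition R_collinear :: "complex \<Rightarrow> complex \<Rightarrow> bool" where
  "R_collinear a b \<longleftrightarrow> (\<exists>r s :: real. (r, s) \<noteq> (0, 0) \<and> of_real r * a + of_real s * b = 0)"

definition hyperbolic_sing :: "nat \<Rightarrow> complex \<times> complex \<Rightarrow> bool" where
  "hyperbolic_sing k q \<longleftrightarrow>
     (\<exists>l1 l2. char_poly (cjac (chart_field k J2) q) = [:-l1, 1:] * [:-l2, 1:]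
              \<and> \<not> R_collinear l1 l2)"

definition rbasis :: "nat \<Rightarrow> complex \<times> complex" where
  "rbasis j = (if j = 0 then (1, 0) else if j = 1 then (\<i>, 0) else if j = 2 then (0, 1) else (0, \<i>))"

definition rcoord :: "nat \<Rightarrow> complex \<times> complex \<Rightarrow> real" where
  "rcoord i w = (if i = 0 then Re (fst w) else if i = 1 then Im (fst w)
                 else if i = 2 then Re (snd w) else Im (snd w))"

text \<open>4x4 real matrix of an R-linear map of C^2, viewed as a complex matrix (for its eigenvalues).\<close>
definition rmat4 :: "(complex \<times> complex \<Rightarrow> complex \<times> complex) \<Rightarrow> complex mat" where
  "rmat4 D = mat 4 4 (\<lambda>(i, j). complex_of_real (rcoord i (D (rbasis j))))"

definition source_W :: "nat \<Rightarrow> complex \<times> complex \<Rightarrow> bool" where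
  "source_W k q \<longleftrightarrow>
     (\<exists>D. (chart_field k rhoJ2 has_derivative D) (at q) \<and>
          (\<forall>\<mu>. eigenvalue (rmat4 D) \<mu> \<longrightarrow> Re \<mu> > 0))"

end

theory Submission
  imports Defs
begin

lemma det0: "det (mat 0 0 f) = 1" by (rule det_dim_zero) simp
lemma det1: "(A :: 'a :: comm_ring_1 mat) \<in> carrier_mat 1 1 \<Longrightarrow> det A = A $$ (0,0)"
  by (subst laplace_expansion_column[of A 1 0]) (auto simp: cofactor_def mat_delete_def det0)
lemma det2: "(A :: 'a :: comm_ring_1 mat) \<in> carrier_mat 2 2 \<Longrightarrow> det A = A $$ (0,0) * A $$ (1,1) - A $$ (0,1) * A $$ (1,0)"
  apply (subst laplace_expansion_column[of A 2 0])
  apply (auto simp: cofactor_def numeral_2_eq_2 lessThan_Suc det1 mat_delete_def)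
  done
lemma cp2: "char_poly (mat 2 2 f) = [: f(0,0)*f(1,1) - f(0,1)*f(1,0), -(f(0,0)+f(1,1)), 1 :]"
  unfolding char_poly_defs
  apply (subst det2) apply simp
  apply (simp add: numeral_2_eq_2)
  done


lemma re_im_split: "(z::complex) = of_real (Re z) + \<i> * of_real (Im z)"
  by (simp add: complex_eq_iff)

lemma eig_rmat4:
  assumes "eigenvalue (rmat4 (\<lambda>h. (a * fst h + b * snd h, c * fst h + d * snd h))) \<mu>"
  shows "(a-\<mu>)*(d-\<mu>) - b*c = 0 \<or> (cnj a - \<mu>)*(cnj d - \<mu>) - cnj b * cnj c = 0"
proof -
  let ?M = "rmat4 (\<lambda>h. (a * fst h + b * snd h, c * fst h + d * snd h))"
  obtain v where v: "v \<in> carrier_vec 4" "v \<noteq> 0\<^sub>v 4" "?M *\<^sub>v v = \<mu> \<cdot>\<^sub>v v"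
    using assms unfolding eigenvalue_def eigenvector_def rmat4_def by auto
  have dv: "dim_vec v = 4" using v by auto
  have e: "(\<Sum>j<4. ?M $$ (i,j) * v$j) = \<mu> * v$i" if "i < 4" for i
  proof -
    have "(?M *\<^sub>v v) $ i = (\<mu> \<cdot>\<^sub>v v) $ i" using v by simp
    then show ?thesis using that dv
      by (simp add: rmat4_def mult_mat_vec_def scalar_prod_def atLeast0LessThan)
  qed
  define w0 where "w0 = v$0"
  define w1 where "w1 = v$1"
  define w2 where "w2 = v$2"
  define w3 where "w3 = v$3"
  have four: "{..<4::nat} = {0,1,2,3}" by auto
  have E0: "of_real (Re a) * w0 - of_real (Im a) * w1 + of_real (Re b) * w2 - of_real (Im b) * w3 = \<mu> * w0"
    using e[of 0] apply (simp add: four rmat4_def rbasis_def rcoord_def w0_def w1_def w2_def w3_def) by (simp add: algebra_simps)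
  have E1: "of_real (Im a) * w0 + of_real (Re a) * w1 + of_real (Im b) * w2 + of_real (Re b) * w3 = \<mu> * w1"
    using e[of 1] apply (simp add: four rmat4_def rbasis_def rcoord_def w0_def w1_def w2_def w3_def) by (simp add: algebra_simps)
  have E2: "of_real (Re c) * w0 - of_real (Im c) * w1 + of_real (Re d) * w2 - of_real (Im d) * w3 = \<mu> * w2"
    using e[of 2] apply (simp add: four rmat4_def rbasis_def rcoord_def w0_def w1_def w2_def w3_def) by (simp add: algebra_simps)
  have E3: "of_real (Im c) * w0 + of_real (Re c) * w1 + of_real (Im d) * w2 + of_real (Re d) * w3 = \<mu> * w3"
    using e[of 3] apply (simp add: four rmat4_def rbasis_def rcoord_def w0_def w1_def w2_def w3_def) by (simp add: algebra_simps)
  define z1 where "z1 = w0 + \<i> * w1"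
  define z2 where "z2 = w2 + \<i> * w3"
  define y1 where "y1 = w0 - \<i> * w1"
  define y2 where "y2 = w2 - \<i> * w3"
  have A1: "(a - \<mu>) * z1 + b * z2 = 0"
  proof -
    have "(a - \<mu>) * z1 + b * z2 = (of_real (Re a) * w0 - of_real (Im a) * w1 + of_real (Re b) * w2 - of_real (Im b) * w3 - \<mu> * w0)
       + \<i> * (of_real (Im a) * w0 + of_real (Re a) * w1 + of_real (Im b) * w2 + of_real (Re b) * w3 - \<mu> * w1)"
      unfolding z1_def z2_def by (subst (1 2) re_im_split) (simp add: algebra_simps)
    then show ?thesis using E0 E1 by simp
  qed
  have A2: "c * z1 + (d - \<mu>) * z2 = 0"
  proof -
    have "c * z1 + (d - \<mu>) * z2 = (of_real (Re c) * w0 - of_real (Im c) * w1 + of_real (Re d) * w2 - of_real (Im d) * w3 - \<mu> * w2)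
       + \<i> * (of_real (Im c) * w0 + of_real (Re c) * w1 + of_real (Im d) * w2 + of_real (Re d) * w3 - \<mu> * w3)"
      unfolding z1_def z2_def by (subst (1 2) re_im_split) (simp add: algebra_simps)
    then show ?thesis using E2 E3 by simp
  qed
  have B1: "(cnj a - \<mu>) * y1 + cnj b * y2 = 0"
  proof -
    have "(cnj a - \<mu>) * y1 + cnj b * y2 = (of_real (Re a) * w0 - of_real (Im a) * w1 + of_real (Re b) * w2 - of_real (Im b) * w3 - \<mu> * w0)
       - \<i> * (of_real (Im a) * w0 + of_real (Re a) * w1 + of_real (Im b) * w2 + of_real (Re b) * w3 - \<mu> * w1)"
      unfolding y1_def y2_def by (subst (1 2) re_im_split) (simp add: algebra_simps)
    then show ?thesis using E0 E1 by simp
  qed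
  have B2: "cnj c * y1 + (cnj d - \<mu>) * y2 = 0"
  proof -
    have "cnj c * y1 + (cnj d - \<mu>) * y2 = (of_real (Re c) * w0 - of_real (Im c) * w1 + of_real (Re d) * w2 - of_real (Im d) * w3 - \<mu> * w2)
       - \<i> * (of_real (Im c) * w0 + of_real (Re c) * w1 + of_real (Im d) * w2 + of_real (Re d) * w3 - \<mu> * w3)"
      unfolding y1_def y2_def by (subst (1 2) re_im_split) (simp add: algebra_simps)
    then show ?thesis using E2 E3 by simp
  qed
  have nz: "z1 \<noteq> 0 \<or> z2 \<noteq> 0 \<or> y1 \<noteq> 0 \<or> y2 \<noteq> 0"
  proof (rule ccontr)
    assume "\<not> ?thesis"
    then have "z1 = 0" "z2 = 0" "y1 = 0" "y2 = 0" by auto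
    then have "w0 = 0" "w1 = 0" "w2 = 0" "w3 = 0" unfolding z1_def z2_def y1_def y2_def
      by (auto simp: algebra_simps)
    then have "v = 0\<^sub>v 4" using dv unfolding w0_def w1_def w2_def w3_def
      by (intro eq_vecI) (auto simp: less_Suc_eq numeral_eq_Suc)
    then show False using v by simp
  qed
  have P1: "((a-\<mu>)*(d-\<mu>) - b*c) * z1 = 0" "((a-\<mu>)*(d-\<mu>) - b*c) * z2 = 0"
  proof -
    have "((a-\<mu>)*(d-\<mu>) - b*c) * z1 = (d - \<mu>) * ((a - \<mu>) * z1 + b * z2) - b * (c * z1 + (d - \<mu>) * z2)"
      by (simp add: algebra_simps)
    then show "((a-\<mu>)*(d-\<mu>) - b*c) * z1 = 0" using A1 A2 by simp
    have "((a-\<mu>)*(d-\<mu>) - b*c) * z2 = (a - \<mu>) * (c * z1 + (d - \<mu>) * z2) - c * ((a - \<mu>) * z1 + b * z2)"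
      by (simp add: algebra_simps)
    then show "((a-\<mu>)*(d-\<mu>) - b*c) * z2 = 0" using A1 A2 by simp
  qed
  have P2: "((cnj a-\<mu>)*(cnj d-\<mu>) - cnj b*cnj c) * y1 = 0" "((cnj a-\<mu>)*(cnj d-\<mu>) - cnj b*cnj c) * y2 = 0"
  proof -
    have "((cnj a-\<mu>)*(cnj d-\<mu>) - cnj b*cnj c) * y1 = (cnj d - \<mu>) * ((cnj a - \<mu>) * y1 + cnj b * y2) - cnj b * (cnj c * y1 + (cnj d - \<mu>) * y2)"
      by (simp add: algebra_simps)
    then show "((cnj a-\<mu>)*(cnj d-\<mu>) - cnj b*cnj c) * y1 = 0" using B1 B2 by simp
    have "((cnj a-\<mu>)*(cnj d-\<mu>) - cnj b*cnj c) * y2 = (cnj a - \<mu>) * (cnj c * y1 + (cnj d - \<mu>) * y2) - cnj c * ((cnj a - \<mu>) * y1 + cnj b * y2)"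
      by (simp add: algebra_simps)
    then show "((cnj a-\<mu>)*(cnj d-\<mu>) - cnj b*cnj c) * y2 = 0" using B1 B2 by simp
  qed
  show ?thesis using nz P1 P2 by auto
qed


lemma quad_re_pos:
  fixes \<mu> :: complex and T D :: real
  assumes "\<mu>^2 - of_real T * \<mu> + of_real D = 0" "T > 0" "T^2 < 4 * D"
  shows "Re \<mu> > 0"
proof -
  have r: "(Re \<mu>)^2 - (Im \<mu>)^2 - T * Re \<mu> + D = 0" and i: "2 * Re \<mu> * Im \<mu> - T * Im \<mu> = 0"
    using arg_cong[OF assms(1), of Re] arg_cong[OF assms(1), of Im] by (simp_all add: power2_eq_square)
  show ?thesis
  proof (cases "Im \<mu> = 0")
    case True
    then have "(Re \<mu> - T/2)^2 + (D - T^2/4) = 0" using r by (simp add: power2_eq_square algebra_simps)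
    moreover have "(Re \<mu> - T/2)^2 \<ge> 0" by simp
    ultimately show ?thesis using assms(3) by linarith
  next
    case False
    then have "2 * Re \<mu> - T = 0" using i by (metis mult.commute mult_eq_0_iff right_diff_distrib)
    then show ?thesis using assms(2) by linarith
  qed
qed

lemma hd_vanish:
  fixes f :: "'a::real_normed_vector \<Rightarrow> complex" and r :: "'a \<Rightarrow> complex"
  assumes fd: "(f has_derivative f') (at q)" and f0: "f q = 0" and rc: "continuous (at q) r"
  shows "((\<lambda>x. r x * f x) has_derivative (\<lambda>h. r q * f' h)) (at q)"
proof -
  have bl: "bounded_linear f'" and lim: "((\<lambda>y. ((f y - f q) - f' (y - q)) /\<^sub>R norm (y - q)) \<longlongrightarrow> 0) (at q)"
    using fd unfolding has_derivative_at_within by auto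
  obtain K where K: "\<And>h. norm (f' h) \<le> norm h * K" "K > 0" using bounded_linear.pos_bounded[OF bl] by blast
  have rl: "(r \<longlongrightarrow> r q) (at q)" using rc by (simp add: continuous_at)
  have t1: "((\<lambda>y. r y * (((f y - f q) - f' (y - q)) /\<^sub>R norm (y - q))) \<longlongrightarrow> r q * 0) (at q)"
    by (intro tendsto_mult rl lim)
  have t2: "((\<lambda>y. (r y - r q) * (f' (y - q) /\<^sub>R norm (y - q))) \<longlongrightarrow> 0) (at q)"
  proof (rule Lim_null_comparison)
    show "\<forall>\<^sub>F y in at q. norm ((r y - r q) * (f' (y - q) /\<^sub>R norm (y - q))) \<le> norm (r y - r q) * K"
    proof (intro always_eventually allI)
      fix y
      have nk: "norm (f' (y - q) /\<^sub>R norm (y - q)) \<le> K"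
      proof (cases "y = q")
        case True then show ?thesis using K by simp
      next
        case False
        then have "norm (y - q) > 0" by simp
        then show ?thesis using K(1)[of "y - q"] by (simp add: field_simps mult.commute)
      qed
      show "norm ((r y - r q) * (f' (y - q) /\<^sub>R norm (y - q))) \<le> norm (r y - r q) * K"
        using mult_left_mono[OF nk norm_ge_zero[of "r y - r q"]] by (simp only: norm_mult)
    qed
    have "((\<lambda>y. norm (r y - r q) * K) \<longlongrightarrow> norm (r q - r q) * K) (at q)"
      by (intro tendsto_intros rl)
    then show "((\<lambda>y. norm (r y - r q) * K) \<longlongrightarrow> 0) (at q)" by simp
  qed
  have "((\<lambda>y. r y * (((f y - f q) - f' (y - q)) /\<^sub>R norm (y - q)) + (r y - r q) * (f' (y - q) /\<^sub>R norm (y - q))) \<longlongrightarrow> 0) (at q)"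
    using tendsto_add[OF t1 t2] by simp
  moreover have "r y * (((f y - f q) - f' (y - q)) /\<^sub>R norm (y - q)) + (r y - r q) * (f' (y - q) /\<^sub>R norm (y - q))
      = ((r y * f y - r q * f q) - r q * f' (y - q)) /\<^sub>R norm (y - q)" for y
    using f0 by (simp add: scaleR_conv_of_real algebra_simps)
  ultimately have "((\<lambda>y. ((r y * f y - r q * f q) - r q * f' (y - q)) /\<^sub>R norm (y - q)) \<longlongrightarrow> 0) (at q)" by simp
  moreover have "bounded_linear (\<lambda>h. r q * f' h)"
    by (intro bounded_linear_compose[OF bounded_linear_mult_right bl])
  ultimately show ?thesis unfolding has_derivative_at_within by simp
qed


lemma hyp_generic:
  assumes "char_poly M = [: a*d - b*c, -(a+d), 1:]" "a + d = -4*w" "a*d - b*c = 7*w^2" "w \<noteq> 0"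
  shows "\<exists>l1 l2. char_poly M = [:-l1, 1:] * [:-l2, 1:] \<and> \<not> R_collinear l1 l2"
proof (intro exI conjI)
  define l1 where "l1 = w * (-2 + \<i> * of_real (sqrt 3))"
  define l2 where "l2 = w * (-2 - \<i> * of_real (sqrt 3))"
  have s3: "(of_real (sqrt 3) :: complex)^2 = 3"
    by (metis of_real_numeral of_real_power real_sqrt_pow2 zero_le_numeral)
  have "l1 * l2 = 7 * w^2" unfolding l1_def l2_def
    by (simp add: algebra_simps power2_eq_square[symmetric] s3)
  moreover have "l1 + l2 = -4*w" unfolding l1_def l2_def by (simp add: algebra_simps)
  moreover have P: "[:-l1, 1:] * [:-l2, 1:] = [: l1*l2, -(l1+l2), 1:]" by (simp add: algebra_simps)
  ultimately show "char_poly M = [:-l1, 1:] * [:-l2, 1:]" using assms by simp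
  show "\<not> R_collinear l1 l2"
  proof
    assume "R_collinear l1 l2"
    then obtain r s :: real where rs: "(r, s) \<noteq> (0, 0)" "of_real r * l1 + of_real s * l2 = 0"
      unfolding R_collinear_def by blast
    then have "w * (of_real (-2 * (r + s)) + \<i> * of_real (sqrt 3 * (r - s))) = 0"
      unfolding l1_def l2_def by (simp add: algebra_simps)
    then have "of_real (-2 * (r + s)) + \<i> * of_real (sqrt 3 * (r - s)) = 0" using assms(4) by simp
    then have "-2 * (r + s) = 0" "sqrt 3 * (r - s) = 0" by (simp_all add: complex_eq_iff)
    then have "r = 0" "s = 0" by auto
    then show False using rs(1) by simp
  qed
qed



lemma source_generic:
  assumes hd: "(G has_derivative (\<lambda>h. (r0 * (a * fst h + b * snd h), r0 * (c * fst h + d * snd h)))) (at q)"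
    and tr: "a + d = -4*w" and dt: "a*d - b*c = 7*w^2" and r0: "r0 = -2 * cnj w / of_real S"
    and S: "S > 0" and w: "w \<noteq> 0"
  shows "\<exists>D. (G has_derivative D) (at q) \<and> (\<forall>\<mu>. eigenvalue (rmat4 D) \<mu> \<longrightarrow> Re \<mu> > 0)"
proof (intro exI conjI allI impI)
  let ?D = "\<lambda>h. ((r0*a) * fst h + (r0*b) * snd h, (r0*c) * fst h + (r0*d) * snd h)"
  have "(\<lambda>h. (r0 * (a * fst h + b * snd h), r0 * (c * fst h + d * snd h))) = ?D"
    by (simp add: fun_eq_iff algebra_simps)
  then show "(G has_derivative ?D) (at q)" using hd by simp
  fix \<mu> assume "eigenvalue (rmat4 ?D) \<mu>"
  from eig_rmat4[OF this]
  have disj: "(r0*a-\<mu>)*(r0*d-\<mu>) - (r0*b)*(r0*c) = 0 \<or> (cnj (r0*a) - \<mu>)*(cnj (r0*d) - \<mu>) - cnj (r0*b) * cnj (r0*c) = 0" .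
  define T where "T = 8 * cmod w ^ 2 / S"
  define \<Delta> where "\<Delta> = 28 * cmod w ^ 4 / S^2"
  have nsq: "complex_of_real (cmod w ^ 2) = w * cnj w" by (rule complex_norm_square)
  have Sc: "complex_of_real S \<noteq> 0" using S by simp
  have e1: "r0*a + r0*d = of_real T"
  proof -
    have "r0*a + r0*d = r0 * (a + d)" by (simp add: algebra_simps)
    also have "\<dots> = 8 * (w * cnj w) / of_real S" unfolding tr r0 using Sc by (simp add: field_simps)
    also have "\<dots> = of_real T" unfolding T_def by (simp add: nsq[symmetric])
    finally show ?thesis .
  qed
  have e2: "(r0*a)*(r0*d) - (r0*b)*(r0*c) = of_real \<Delta>"
  proof -
    have "(r0*a)*(r0*d) - (r0*b)*(r0*c) = r0^2 * (a*d - b*c)" by (simp add: algebra_simps power2_eq_square)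
    also have "\<dots> = 28 * (w * cnj w)^2 / (of_real S)^2" unfolding dt r0 using Sc by (simp add: field_simps power2_eq_square)
    also have "\<dots> = of_real \<Delta>" unfolding \<Delta>_def by (simp add: nsq[symmetric] power_mult_distrib[symmetric] flip: power_mult)
    finally show ?thesis .
  qed
  have Tpos: "T > 0" unfolding T_def using S w by simp
  have Tl: "T^2 < 4 * \<Delta>" unfolding T_def \<Delta>_def using S w
    by (simp add: power_divide power_mult_distrib field_simps flip: power_mult)
  have q1: "\<mu>^2 - of_real T * \<mu> + of_real \<Delta> = 0" if "(r0*a-\<mu>)*(r0*d-\<mu>) - (r0*b)*(r0*c) = 0"
  proof -
    have "\<mu>^2 - (r0*a + r0*d) * \<mu> + ((r0*a)*(r0*d) - (r0*b)*(r0*c)) = (r0*a-\<mu>)*(r0*d-\<mu>) - (r0*b)*(r0*c)"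
      by (simp add: algebra_simps power2_eq_square)
    then show ?thesis using that e1 e2 by simp
  qed
  have q2: "\<mu>^2 - of_real T * \<mu> + of_real \<Delta> = 0" if "(cnj (r0*a) - \<mu>)*(cnj (r0*d) - \<mu>) - cnj (r0*b) * cnj (r0*c) = 0"
  proof -
    have "\<mu>^2 - cnj (r0*a + r0*d) * \<mu> + cnj ((r0*a)*(r0*d) - (r0*b)*(r0*c)) = (cnj (r0*a) - \<mu>)*(cnj (r0*d) - \<mu>) - cnj (r0*b) * cnj (r0*c)"
      by (simp add: algebra_simps power2_eq_square)
    then show ?thesis using that e1 e2 by simp
  qed
  show "Re \<mu> > 0" using disj q1 q2 quad_re_pos[OF _ Tpos Tl] by blast
qed



lemma cjac_cp:
  assumes "((\<lambda>s. fst (X (s, snd q))) has_field_derivative a) (at (fst q))"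
    "((\<lambda>s. fst (X (fst q, s))) has_field_derivative b) (at (snd q))"
    "((\<lambda>s. snd (X (s, snd q))) has_field_derivative c) (at (fst q))"
    "((\<lambda>s. snd (X (fst q, s))) has_field_derivative d) (at (snd q))"
  shows "char_poly (cjac X q) = [: a*d - b*c, -(a+d), 1:]"
  unfolding cjac_def cp2 using DERIV_imp_deriv[OF assms(1)] DERIV_imp_deriv[OF assms(2)]
    DERIV_imp_deriv[OF assms(3)] DERIV_imp_deriv[OF assms(4)] by simp

lemma G_deriv:
  fixes F :: "'a::real_normed_vector \<Rightarrow> complex \<times> complex"
  assumes "\<And>x. G x = (r x * fst (F x), r x * snd (F x))"
    "((\<lambda>x. fst (F x)) has_derivative f1) (at q)" "((\<lambda>x. snd (F x)) has_derivative f2) (at q)"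
    "F q = (0,0)" "continuous (at q) r"
  shows "(G has_derivative (\<lambda>h. (r q * f1 h, r q * f2 h))) (at q)"
proof -
  have "G = (\<lambda>x. (r x * fst (F x), r x * snd (F x)))" using assms(1) by auto
  moreover have "((\<lambda>x. r x * fst (F x)) has_derivative (\<lambda>h. r q * f1 h)) (at q)"
    by (rule hd_vanish[OF assms(2) _ assms(5)]) (simp add: assms(4))
  moreover have "((\<lambda>x. r x * snd (F x)) has_derivative (\<lambda>h. r q * f2 h)) (at q)"
    by (rule hd_vanish[OF assms(3) _ assms(5)]) (simp add: assms(4))
  ultimately show ?thesis by (simp add: has_derivative_Pair)
qed

lemma coord_cscale: "coord k (cscale r p) = r * coord k p"
  by (cases p) auto
lemma others_cscale: "others k (cscale r p) = (r * fst (others k p), r * snd (others k p))"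
  by (cases p) auto
lemma chart_rho: "chart_field k rhoJ2 x = (rho (emb k x) * fst (chart_field k J2 x), rho (emb k x) * snd (chart_field k J2 x))"
  unfolding chart_field_def rhoJ2_def Let_def coord_cscale others_cscale by (simp add: algebra_simps)

lemma F0: "chart_field 0 J2 x = (snd x ^2 - fst x ^3, 1 - fst x ^2 * snd x)"
  by (cases x) (simp add: chart_field_def algebra_simps power2_eq_square power3_eq_cube)

lemma chart0:
  assumes e1: "v^2 = u^3" and e2: "u^2 * v = 1"
  shows "hyperbolic_sing 0 (u,v) \<and> source_W 0 (u,v)"
proof
  have u: "u \<noteq> 0" using e2 by auto
  have cp: "char_poly (cjac (chart_field 0 J2) (u,v)) = [: (-3*u^2)*(-(u^2)) - (2 * v)*(-(2*u * v)), -((-3*u^2) + (-(u^2))), 1:]"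
    by (rule cjac_cp) (auto simp: F0 intro!: derivative_eq_intros)
  show "hyperbolic_sing 0 (u,v)" unfolding hyperbolic_sing_def
  proof (rule hyp_generic[OF cp, of "u^2"])
    show "(-3*u^2)*(-(u^2)) - (2 * v)*(-(2*u * v)) = 7*(u^2)^2"
    proof -
      have "(-3*u^2)*(-(u^2)) - (2 * v)*(-(2*u * v)) = 3*u^4 + 4*u * v^2" by (simp add: algebra_simps power2_eq_square power4_eq_xxxx)
      also have "\<dots> = 7*(u^2)^2" using e1 by (simp add: algebra_simps power2_eq_square power4_eq_xxxx power3_eq_cube)
      finally show ?thesis .
    qed
  qed (use u in auto)
  define S where "S = 1 + cmod u ^ 2 + cmod v ^ 2"
  have Sp: "S > 0" unfolding S_def by (simp add: add_pos_nonneg)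
  have nu: "complex_of_real (cmod u ^ 2) = u * cnj u" and nv: "complex_of_real (cmod v ^ 2) = v * cnj v"
    by (rule complex_norm_square)+
  have c2: "cnj u ^ 2 * cnj v = 1" using arg_cong[OF e2, of cnj] by simp
  have herm: "herm (emb 0 (u,v)) (J2 (emb 0 (u,v))) = cnj u ^ 2 * of_real S"
  proof -
    have h1: "cnj u ^ 2 * (u * cnj u) = u * cnj v ^ 2" using arg_cong[OF e1, of cnj]
      by (simp add: power2_eq_square power3_eq_cube algebra_simps)
    have h2: "cnj u ^ 2 * (v * cnj v) = v" using c2 by (simp add: algebra_simps)
    have "herm (emb 0 (u,v)) (J2 (emb 0 (u,v))) = cnj u ^ 2 + u * cnj v ^ 2 + v" by simp
    also have "\<dots> = cnj u ^ 2 + cnj u ^ 2 * (u * cnj u) + cnj u ^ 2 * (v * cnj v)" by (simp only: h1 h2)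
    also have "\<dots> = cnj u ^ 2 * of_real S" by (simp only: S_def of_real_add of_real_1 nu nv) (simp add: algebra_simps)
    finally show ?thesis .
  qed
  have rho0: "rho (emb 0 (u,v)) = -2 * cnj (u^2) / of_real S"
  proof -
    have "rho (emb 0 (u,v)) = -2 * (cnj u ^ 2 * of_real S) / of_real (S^2)"
      unfolding rho_def herm by (simp add: S_def)
    then show ?thesis using Sp by (simp add: power2_eq_square)
  qed
  have cont: "continuous (at (u,v)) (\<lambda>x. rho (emb 0 x))"
  proof -
    have eq: "(\<lambda>x. rho (emb 0 x)) = (\<lambda>x. -2 * (cnj (fst x ^ 2) + fst x * cnj (snd x ^ 2) + snd x) /
        of_real ((1 + cmod (fst x) ^ 2 + cmod (snd x) ^ 2) ^ 2))"
      by (rule ext, case_tac x) (simp add: rho_def)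
    have pos: "1 + cmod a ^ 2 + cmod b ^ 2 \<noteq> 0" for a b
    proof -
      have "0 \<le> cmod a ^ 2" "0 \<le> cmod b ^ 2" by simp_all
      then show ?thesis by linarith
    qed
    show ?thesis unfolding eq
      by (intro continuous_intros) (auto simp del: of_real_add of_real_power simp add: pos)
  qed
  have Fz: "chart_field 0 J2 (u,v) = (0,0)" using e1 e2 by (simp add: F0)
  have d1: "((\<lambda>x. fst (chart_field 0 J2 x)) has_derivative (\<lambda>h. (-3*u^2) * fst h + (2 * v) * snd h)) (at (u,v))"
    unfolding F0 fst_conv snd_conv by (auto intro!: derivative_eq_intros simp: fun_eq_iff algebra_simps power2_eq_square power3_eq_cube)
  have d2: "((\<lambda>x. snd (chart_field 0 J2 x)) has_derivative (\<lambda>h. (-(2*u * v)) * fst h + (-(u^2)) * snd h)) (at (u,v))"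
    unfolding F0 fst_conv snd_conv by (auto intro!: derivative_eq_intros simp: fun_eq_iff algebra_simps power2_eq_square power3_eq_cube)
  have G: "(chart_field 0 rhoJ2 has_derivative (\<lambda>h. (rho (emb 0 (u,v)) * ((-3*u^2) * fst h + (2 * v) * snd h),
      rho (emb 0 (u,v)) * ((-(2*u * v)) * fst h + (-(u^2)) * snd h)))) (at (u,v))"
    by (rule G_deriv[OF chart_rho d1 d2 Fz cont])
  show "source_W 0 (u,v)" unfolding source_W_def
  proof (rule source_generic[OF G _ _ rho0 Sp])
    show "(-3*u^2)*(-(u^2)) - (2 * v)*(-(2*u * v)) = 7*(u^2)^2"
    proof -
      have "(-3*u^2)*(-(u^2)) - (2 * v)*(-(2*u * v)) = 3*u^4 + 4*u * v^2" by (simp add: algebra_simps power2_eq_square power4_eq_xxxx)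
      also have "\<dots> = 7*(u^2)^2" using e1 by (simp add: algebra_simps power2_eq_square power4_eq_xxxx power3_eq_cube)
      finally show ?thesis .
    qed
  qed (use u in auto)
qed

lemma F2: "chart_field 2 J2 x = (snd x ^2 - fst x ^3, 1 - fst x ^2 * snd x)"
  by (cases x) (simp add: chart_field_def algebra_simps power2_eq_square power3_eq_cube)

lemma F1: "chart_field 1 J2 x = (1 - fst x * snd x ^2, fst x ^2 - snd x ^3)"
  by (cases x) (simp add: chart_field_def algebra_simps power2_eq_square power3_eq_cube)

lemma chart2:
  assumes e1: "v^2 = u^3" and e2: "u^2 * v = 1"
  shows "hyperbolic_sing 2 (u,v) \<and> source_W 2 (u,v)"
proof
  have u: "u \<noteq> 0" using e2 by auto
  have cp: "char_poly (cjac (chart_field 2 J2) (u,v)) = [: (-3*u^2)*(-(u^2)) - (2 * v)*(-(2*u * v)), -((-3*u^2) + (-(u^2))), 1:]"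
    by (rule cjac_cp) (auto simp: F2 intro!: derivative_eq_intros)
  show "hyperbolic_sing 2 (u,v)" unfolding hyperbolic_sing_def
  proof (rule hyp_generic[OF cp, of "u^2"])
    show "(-3*u^2)*(-(u^2)) - (2 * v)*(-(2*u * v)) = 7*(u^2)^2"
    proof -
      have "(-3*u^2)*(-(u^2)) - (2 * v)*(-(2*u * v)) = 3*u^4 + 4*u * v^2" by (simp add: algebra_simps power2_eq_square power4_eq_xxxx)
      also have "\<dots> = 7*(u^2)^2" using e1 by (simp add: algebra_simps power2_eq_square power4_eq_xxxx power3_eq_cube)
      finally show ?thesis .
    qed
  qed (use u in auto)
  define S where "S = cmod u ^ 2 + cmod v ^ 2 + 1"
  have Sp: "S > 0"
  proof -
    have "0 \<le> cmod u ^ 2" "0 \<le> cmod v ^ 2" by simp_all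
    then show ?thesis unfolding S_def by linarith
  qed
  have nu: "complex_of_real (cmod u ^ 2) = u * cnj u" and nv: "complex_of_real (cmod v ^ 2) = v * cnj v"
    by (rule complex_norm_square)+
  have c2: "cnj u ^ 2 * cnj v = 1" using arg_cong[OF e2, of cnj] by simp
  have herm: "herm (emb 2 (u,v)) (J2 (emb 2 (u,v))) = cnj u ^ 2 * of_real S"
  proof -
    have h1: "cnj u ^ 2 * (u * cnj u) = u * cnj v ^ 2" using arg_cong[OF e1, of cnj]
      by (simp add: power2_eq_square power3_eq_cube algebra_simps)
    have h2: "cnj u ^ 2 * (v * cnj v) = v" using c2 by (simp add: algebra_simps)
    have "herm (emb 2 (u,v)) (J2 (emb 2 (u,v))) = cnj u ^ 2 + u * cnj v ^ 2 + v" by (simp add: algebra_simps)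
    also have "\<dots> = cnj u ^ 2 + cnj u ^ 2 * (u * cnj u) + cnj u ^ 2 * (v * cnj v)" by (simp only: h1 h2)
    also have "\<dots> = cnj u ^ 2 * of_real S" by (simp only: S_def of_real_add of_real_1 nu nv) (simp add: algebra_simps)
    finally show ?thesis .
  qed
  have rho0: "rho (emb 2 (u,v)) = -2 * cnj (u^2) / of_real S"
  proof -
    have "rho (emb 2 (u,v)) = -2 * (cnj u ^ 2 * of_real S) / of_real (S^2)"
      unfolding rho_def herm by (simp add: S_def)
    then show ?thesis using Sp by (simp add: power2_eq_square)
  qed
  have cont: "continuous (at (u,v)) (\<lambda>x. rho (emb 2 x))"
  proof -
    have eq: "(\<lambda>x. rho (emb 2 x)) = (\<lambda>x. -2 * (fst x * cnj (snd x ^ 2) + snd x + cnj (fst x ^ 2)) /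
        of_real ((cmod (fst x) ^ 2 + cmod (snd x) ^ 2 + 1) ^ 2))"
      by (rule ext, case_tac x) (simp add: rho_def)
    have pos: "cmod a ^ 2 + cmod b ^ 2 + 1 \<noteq> 0" for a b
    proof -
      have "0 \<le> cmod a ^ 2" "0 \<le> cmod b ^ 2" by simp_all
      then show ?thesis by linarith
    qed
    show ?thesis unfolding eq
      by (intro continuous_intros) (auto simp del: of_real_add of_real_power simp add: pos)
  qed
  have Fz: "chart_field 2 J2 (u,v) = (0,0)" using e1 e2 by (simp add: F2)
  have d1: "((\<lambda>x. fst (chart_field 2 J2 x)) has_derivative (\<lambda>h. (-3*u^2) * fst h + (2 * v) * snd h)) (at (u,v))"
    unfolding F2 fst_conv snd_conv by (auto intro!: derivative_eq_intros simp: fun_eq_iff algebra_simps power2_eq_square power3_eq_cube)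
  have d2: "((\<lambda>x. snd (chart_field 2 J2 x)) has_derivative (\<lambda>h. (-(2*u * v)) * fst h + (-(u^2)) * snd h)) (at (u,v))"
    unfolding F2 fst_conv snd_conv by (auto intro!: derivative_eq_intros simp: fun_eq_iff algebra_simps power2_eq_square power3_eq_cube)
  have G: "(chart_field 2 rhoJ2 has_derivative (\<lambda>h. (rho (emb 2 (u,v)) * ((-3*u^2) * fst h + (2 * v) * snd h),
      rho (emb 2 (u,v)) * ((-(2*u * v)) * fst h + (-(u^2)) * snd h)))) (at (u,v))"
    by (rule G_deriv[OF chart_rho d1 d2 Fz cont])
  show "source_W 2 (u,v)" unfolding source_W_def
  proof (rule source_generic[OF G _ _ rho0 Sp])
    show "(-3*u^2)*(-(u^2)) - (2 * v)*(-(2*u * v)) = 7*(u^2)^2"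
    proof -
      have "(-3*u^2)*(-(u^2)) - (2 * v)*(-(2*u * v)) = 3*u^4 + 4*u * v^2" by (simp add: algebra_simps power2_eq_square power4_eq_xxxx)
      also have "\<dots> = 7*(u^2)^2" using e1 by (simp add: algebra_simps power2_eq_square power4_eq_xxxx power3_eq_cube)
      finally show ?thesis .
    qed
  qed (use u in auto)
qed
lemma chart1:
  assumes e1: "u^2 = v^3" and e2: "u * v^2 = 1"
  shows "hyperbolic_sing 1 (u,v) \<and> source_W 1 (u,v)"
proof
  have u: "v \<noteq> 0" using e2 by auto
  have dd: "(-(v^2))*(-3 * v^2) - (-(2*u * v))*(2*u) = 7*(v^2)^2"
  proof -
    have "(-(v^2))*(-3 * v^2) - (-(2*u * v))*(2*u) = 3 * v^4 + 4*u^2 * v" by (simp add: algebra_simps power2_eq_square power4_eq_xxxx)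
    also have "\<dots> = 7*(v^2)^2" using e1 by (simp add: algebra_simps power2_eq_square power4_eq_xxxx power3_eq_cube)
    finally show ?thesis .
  qed
  have cp: "char_poly (cjac (chart_field 1 J2) (u,v)) = [: (-(v^2))*(-3 * v^2) - (-(2*u * v))*(2*u), -((-(v^2)) + (-3 * v^2)), 1:]"
    by (rule cjac_cp) (auto simp: F1 F1[unfolded One_nat_def] intro!: derivative_eq_intros)
  show "hyperbolic_sing 1 (u,v)" unfolding hyperbolic_sing_def
    by (rule hyp_generic[OF cp _ dd]) (use u in auto)
  define S where "S = cmod u ^ 2 + 1 + cmod v ^ 2"
  have Sp: "S > 0"
  proof -
    have "0 \<le> cmod u ^ 2" "0 \<le> cmod v ^ 2" by simp_all
    then show ?thesis unfolding S_def by linarith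
  qed
  have nu: "complex_of_real (cmod u ^ 2) = u * cnj u" and nv: "complex_of_real (cmod v ^ 2) = v * cnj v"
    by (rule complex_norm_square)+
  have c2: "cnj u * cnj v ^ 2 = 1" using arg_cong[OF e2, of cnj] by simp
  have herm: "herm (emb 1 (u,v)) (J2 (emb 1 (u,v))) = cnj v ^ 2 * of_real S"
  proof -
    have h1: "cnj v ^ 2 * (u * cnj u) = u" using c2 by (simp add: algebra_simps)
    have h2: "cnj v ^ 2 * (v * cnj v) = v * cnj u ^ 2" using arg_cong[OF e1, of cnj]
      by (simp add: power2_eq_square power3_eq_cube algebra_simps)
    have "herm (emb 1 (u,v)) (J2 (emb 1 (u,v))) = u + cnj v ^ 2 + v * cnj u ^ 2" by (simp add: algebra_simps)
    also have "\<dots> = cnj v ^ 2 * (u * cnj u) + cnj v ^ 2 + cnj v ^ 2 * (v * cnj v)" by (simp only: h1 h2)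
    also have "\<dots> = cnj v ^ 2 * of_real S" by (simp only: S_def of_real_add of_real_1 nu nv) (simp add: algebra_simps)
    finally show ?thesis .
  qed
  have rho0: "rho (emb 1 (u,v)) = -2 * cnj (v^2) / of_real S"
  proof -
    have "rho (emb 1 (u,v)) = -2 * (cnj v ^ 2 * of_real S) / of_real (S^2)"
      unfolding rho_def herm by (simp add: S_def)
    then show ?thesis using Sp by (simp add: power2_eq_square)
  qed
  have cont: "continuous (at (u,v)) (\<lambda>x. rho (emb 1 x))"
  proof -
    have eq: "(\<lambda>x. rho (emb 1 x)) = (\<lambda>x. -2 * (fst x + cnj (snd x ^ 2) + snd x * cnj (fst x ^ 2)) /
        of_real ((cmod (fst x) ^ 2 + 1 + cmod (snd x) ^ 2) ^ 2))"
      by (rule ext, case_tac x) (simp add: rho_def)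
    have pos: "cmod a ^ 2 + 1 + cmod b ^ 2 \<noteq> 0" for a b
    proof -
      have "0 \<le> cmod a ^ 2" "0 \<le> cmod b ^ 2" by simp_all
      then show ?thesis by linarith
    qed
    show ?thesis unfolding eq
      by (intro continuous_intros) (auto simp del: of_real_add of_real_power simp add: pos)
  qed
  have Fz: "chart_field 1 J2 (u,v) = (0,0)" using e1 e2 by (simp add: F1 F1[unfolded One_nat_def])
  have d1: "((\<lambda>x. fst (chart_field 1 J2 x)) has_derivative (\<lambda>h. (-(v^2)) * fst h + (-(2*u * v)) * snd h)) (at (u,v))"
    unfolding F1 fst_conv snd_conv by (auto intro!: derivative_eq_intros simp: fun_eq_iff algebra_simps power2_eq_square power3_eq_cube)
  have d2: "((\<lambda>x. snd (chart_field 1 J2 x)) has_derivative (\<lambda>h. (2*u) * fst h + (-3 * v^2) * snd h)) (at (u,v))"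
    unfolding F1 fst_conv snd_conv by (auto intro!: derivative_eq_intros simp: fun_eq_iff algebra_simps power2_eq_square power3_eq_cube)
  have G: "(chart_field 1 rhoJ2 has_derivative (\<lambda>h. (rho (emb 1 (u,v)) * ((-(v^2)) * fst h + (-(2*u * v)) * snd h),
      rho (emb 1 (u,v)) * ((2*u) * fst h + (-3 * v^2) * snd h)))) (at (u,v))"
    by (rule G_deriv[OF chart_rho d1 d2 Fz cont])
  show "source_W 1 (u,v)" unfolding source_W_def
    by (rule source_generic[OF G _ dd rho0 Sp]) (use u in auto)
qed



theorem mainTheorem17:
  shows "(\<forall>p :: c3. p \<noteq> 0 \<longrightarrow> J2 p \<noteq> 0) \<and>
         (\<forall>p. sing_J2 p \<longrightarrow>
            (\<forall>k < 3. coord k p \<noteq> 0 \<longrightarrow>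
               hyperbolic_sing k (aff k p) \<and> source_W k (aff k p)))"
proof (rule conjI)
  show "\<forall>p :: c3. p \<noteq> 0 \<longrightarrow> J2 p \<noteq> 0"
  proof (intro allI impI)
    fix p :: c3 assume "p \<noteq> 0"
    then show "J2 p \<noteq> 0" by (cases p) (auto simp: zero_prod_def)
  qed
next
  show "\<forall>p. sing_J2 p \<longrightarrow>
            (\<forall>k < 3. coord k p \<noteq> 0 \<longrightarrow>
               hyperbolic_sing k (aff k p) \<and> source_W k (aff k p))"
  proof (intro allI impI)
  fix p :: c3 and k :: nat
  assume sp: "sing_J2 p" and k: "k < 3" and ck: "coord k p \<noteq> 0"
  obtain x y z where p: "p = (x, y, z)" by (cases p) auto
  obtain c where "J2 p = cscale c p" using sp unfolding sing_J2_def by blast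
  then have r1: "y^2 = c * x" and r2: "z^2 = c * y" and r3: "x^2 = c * z" unfolding p by auto
  have "k = 0 \<or> k = 1 \<or> k = 2" using k by auto
  then show "hyperbolic_sing k (aff k p) \<and> source_W k (aff k p)"
  proof (elim disjE)
    assume k0: "k = 0"
    then have x: "x \<noteq> 0" using ck p by simp
    have a: "aff k p = (y/x, z/x)" unfolding k0 p aff_def by simp
    have "(z/x)^2 = (y/x)^3"
    proof -
      have h: "y^3 = z^2 * x" using r1 r2 by (simp add: power2_eq_square power3_eq_cube algebra_simps)
      show ?thesis using x by (simp add: power_divide h; simp add: field_simps power2_eq_square power3_eq_cube)
    qed
    moreover have "(y/x)^2 * (z/x) = 1"
    proof -
      have h: "y^2 * z = x^3" using r1 r3 by (simp add: power2_eq_square power3_eq_cube algebra_simps)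
      have "(y/x)^2 * (z/x) = (y^2 * z) / x^3" using x by (simp add: power_divide field_simps power2_eq_square power3_eq_cube)
      then show ?thesis using h x by simp
    qed
    ultimately show ?thesis unfolding k0 a[unfolded k0] by (rule chart0)
  next
    assume k1: "k = 1"
    then have y: "y \<noteq> 0" using ck p by simp
    have a: "aff k p = (x/y, z/y)" unfolding k1 p aff_def by simp
    have "(x/y)^2 = (z/y)^3"
    proof -
      have h: "z^3 = x^2 * y" using r2 r3 by (simp add: power2_eq_square power3_eq_cube algebra_simps)
      show ?thesis using y by (simp add: power_divide h; simp add: field_simps power2_eq_square power3_eq_cube)
    qed
    moreover have "(x/y) * (z/y)^2 = 1"
    proof -
      have h: "x * z^2 = y^3" using r1 r2 by (simp add: power2_eq_square power3_eq_cube algebra_simps)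
      have "(x/y) * (z/y)^2 = (x * z^2) / y^3" using y by (simp add: power_divide field_simps power2_eq_square power3_eq_cube)
      then show ?thesis using h y by simp
    qed
    ultimately show ?thesis unfolding k1 a[unfolded k1] by (rule chart1)
  next
    assume k2: "k = 2"
    then have z: "z \<noteq> 0" using ck p by simp
    have a: "aff k p = (x/z, y/z)" unfolding k2 p aff_def by simp
    have "(y/z)^2 = (x/z)^3"
    proof -
      have h: "x^3 = y^2 * z" using r1 r3 by (simp add: power2_eq_square power3_eq_cube algebra_simps)
      show ?thesis using z by (simp add: power_divide h; simp add: field_simps power2_eq_square power3_eq_cube)
    qed
    moreover have "(x/z)^2 * (y/z) = 1"
    proof -
      have h: "x^2 * y = z^3" using r2 r3 by (simp add: power2_eq_square power3_eq_cube algebra_simps)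
      have "(x/z)^2 * (y/z) = (x^2 * y) / z^3" using z by (simp add: power_divide field_simps power2_eq_square power3_eq_cube)
      then show ?thesis using h z by simp
    qed
    ultimately show ?thesis unfolding k2 a[unfolded k2] by (rule chart2)
  qed
  qed
qed

end
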